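(* Let $N, s \in \mathbb{N}$ with $\gcd(N, s) = 1$, and let $s'$ be the unique integer in $[1,N-1]$ with $s s'\equiv 1 \pmod N$. Let $H<P$ be natural numbers, and suppose $p_0 = sx_0 + 1$ (with $x_0$ an integer) is a divisor of $N$ lying in the interval $[P-H, P+H]$. Let $\tilde{P}$ be the unique integer in $[0,s-1]$ with $\tilde P\equiv P \pmod s$, and define $g(x) \in \mathbb{Z}[x]$ by $g(x) = x + c$, where $c$ is the unique integer in $[0,N-1]$ congruent to $s' + s'(P - \tilde{P})$ modulo $N$. Let $x' = x_0 - \frac{P - \tilde{P}}{s}$. Then: (1) $x'$ is an integer and $p_0 \mid g(x')$; (2) $|x'| \le H/s+1$. *)

theory Defs
  imports Complex_Main "HOL-Computational_Algebra.Polynomial" "HOL-Number_Theory.Cong"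
begin

end

theory Submission
  imports Defs
begin

theorem claim3p3:
  fixes N s H P :: nat and s' x0 p0 Pt c :: int and g :: "int poly" and x' :: real
  assumes cop: "gcd N s = 1"
    and s'_rng: "1 \<le> s' \<and> s' \<le> int N - 1" and s'_inv: "[int s * s' = 1] (mod int N)"
    and HP: "H < P"
    and p0_def: "p0 = int s * x0 + 1"
    and p0_dvd: "p0 dvd int N"
    and p0_rng: "int P - int H \<le> p0 \<and> p0 \<le> int P + int H"
    and Pt_rng: "0 \<le> Pt \<and> Pt \<le> int s - 1" and Pt_cong: "[Pt = int P] (mod int s)"
    and c_rng: "0 \<le> c \<and> c \<le> int N - 1"
    and c_cong: "[c = s' + s' * (int P - Pt)] (mod int N)"
    and g_def: "g = [:c, 1:]"
    and x'_def: "x' = real_of_int x0 - real_of_int (int P - Pt) / real s"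
  shows "(\<exists>k::int. real_of_int k = x' \<and> p0 dvd poly g k) \<and> \<bar>x'\<bar> \<le> real H / real s + 1"
proof -
  have N2: "N \<ge> 2" using s'_rng by linarith
  have s0: "s \<noteq> 0" using cop N2 by (metis gcd_nat.right_neutral numeral_le_one_iff semiring_norm(69))
  hence spos: "int s > 0" by simp
  have "int s dvd int P - Pt" using Pt_cong by (metis cong_iff_dvd_diff cong_sym)
  then obtain m where m: "int P - Pt = int s * m" by (auto elim: dvdE)
  have x'm: "x' = real_of_int (x0 - m)" using x'_def m s0 by simp
  have d1: "p0 dvd int s * s' - 1" using s'_inv p0_dvd
    by (meson cong_iff_dvd_diff cong_sym dvd_trans)
  have d2: "p0 dvd c - (s' + s' * (int P - Pt))" using c_cong p0_dvd
    by (meson cong_iff_dvd_diff dvd_trans)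
  have d3: "p0 dvd int s * x0 + 1" using p0_def by simp
  have eq: "int s * (x0 - m + c) = int s * (c - (s' + s' * (int P - Pt)))
      + (1 + int s * m) * (int s * s' - 1) + (int s * x0 + 1)"
    using m by (simp add: algebra_simps)
  have "p0 dvd int s * (x0 - m + c)" unfolding eq using d1 d2 d3 by simp
  moreover have "coprime p0 (int s)"
    using p0_def by (metis coprime_iff_gcd_eq_1 gcd_add_mult gcd.commute gcd_1_int mult.commute)
  ultimately have dv: "p0 dvd x0 - m + c" using coprime_dvd_mult_right_iff by blast
  have part1: "\<exists>k::int. real_of_int k = x' \<and> p0 dvd poly g k"
    by (rule exI[of _ "x0 - m"]) (use dv x'm g_def in \<open>simp add: algebra_simps\<close>)
  have e2: "int s * (x0 - m) = p0 - 1 - int P + Pt" using m p0_def by (simp add: algebra_simps)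
  have b: "\<bar>int s * (x0 - m)\<bar> \<le> int H + int s" using e2 p0_rng Pt_rng spos by linarith
  have "\<bar>real s * real_of_int (x0 - m)\<bar> \<le> real H + real s"
  proof -
    have "real_of_int \<bar>int s * (x0 - m)\<bar> \<le> real_of_int (int H + int s)" using b by linarith
    thus ?thesis by simp
  qed
  hence "real s * \<bar>real_of_int (x0 - m)\<bar> \<le> real H + real s" by (simp add: abs_mult)
  hence "\<bar>real_of_int (x0 - m)\<bar> \<le> (real H + real s) / real s"
    using s0 by (simp add: field_simps)
  also have "\<dots> = real H / real s + 1" using s0 by (simp add: field_simps)
  finally show ?thesis using part1 x'm by simp
qed

end
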